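(* Let $X$ be a log-normal random variable with parameters $\mu\in\mathbb{R}$ and $\sigma^2>0$, i.e. with density $f(x)=\frac{1}{x\sqrt{2\pi\sigma^2}}\exp\left\{-\frac{(\log x-\mu)^2}{2\sigma^2}\right\}$ on $(0,\infty)$. Then $X$ is truly mode positively skewed.
   Context: For $p\ge 1$ and a continuous random variable $X$ with $E[|X|^{p-1}]<\infty$, the $p$-mean $\nu_p$ is the unique real solution $\nu$ of $E[(X-\nu)_+^{p-1}]=E[(\nu-X)_+^{p-1}]$; its domain is $\mathcal{D}=\{p\ge1:E[|X|^{p-1}]<\infty\}$. For a unimodal distribution, $\nu_0$ denotes the mode and $\mathcal{D}_0=\mathcal{D}\cup\{0\}$. A unimodal distribution is truly mode positively skewed if $p\mapsto\nu_p$ is increasing on $\mathcal{D}_0$. *)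

theory Defs
  imports "HOL-Probability.Probability"
begin

definition lognormal_density :: "real \<Rightarrow> real \<Rightarrow> real \<Rightarrow> real" where
  "lognormal_density mu sigma2 x =
     (if x > 0 then exp (- ((ln x - mu)\<^sup>2) / (2 * sigma2)) / (x * sqrt (2 * pi * sigma2)) else 0)"

text \<open>Positive part raised to a power: (t)_+^a, with (t)_+^0 read as the indicator of t > 0.\<close>
definition pos_pow :: "real \<Rightarrow> real \<Rightarrow> real" where
  "pos_pow t a = (if t > 0 then t powr a else 0)"

definition pmean_domain :: "real measure \<Rightarrow> real set" where
  "pmean_domain N = {p. p \<ge> 1 \<and> integrable N (\<lambda>x. \<bar>x\<bar> powr (p - 1))}"

definition pmean :: "real measure \<Rightarrow> real \<Rightarrow> real" where
  "pmean N p = (THE nu. (\<integral>x. pos_pow (x - nu) (p - 1) \<partial>N) = (\<integral>x. pos_pow (nu - x) (p - 1) \<partial>N))"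

definition unimodal_density :: "(real \<Rightarrow> real) \<Rightarrow> bool" where
  "unimodal_density f \<longleftrightarrow> (\<exists>m. mono_on {..m} f \<and> antimono_on {m..} f)"

definition density_mode :: "(real \<Rightarrow> real) \<Rightarrow> real" where
  "density_mode f = (THE m. \<forall>x. x \<noteq> m \<longrightarrow> f x < f m)"

definition truly_mode_pos_skewed :: "real measure \<Rightarrow> (real \<Rightarrow> real) \<Rightarrow> bool" where
  "truly_mode_pos_skewed N f \<longleftrightarrow>
     unimodal_density f \<and>
     strict_mono_on (pmean_domain N \<union> {0}) (\<lambda>p. if p = 0 then density_mode f else pmean N p)"

end

theory Submission
  imports Defs
begin

abbreviation ld where "ld \<equiv> lognormal_density"

lemma ld_nonneg: "s > 0 \<Longrightarrow> 0 \<le> ld mu s x"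
  by (simp add: lognormal_density_def)

lemma ld_pos: "s > 0 \<Longrightarrow> x > 0 \<Longrightarrow> 0 < ld mu s x"
  by (simp add: lognormal_density_def)

lemma ld_zero: "x \<le> 0 \<Longrightarrow> ld mu s x = 0"
  by (simp add: lognormal_density_def)

lemma ld_meas[measurable]: "ld mu s \<in> borel_measurable borel"
  unfolding lognormal_density_def by measurable

lemma pos_pow_meas[measurable]: "(\<lambda>x. pos_pow (f x) r) \<in> borel_measurable M"
  if [measurable]: "f \<in> borel_measurable M" for f :: "_ \<Rightarrow> real"
  unfolding pos_pow_def by measurable

lemma pos_pow_nonneg: "0 \<le> pos_pow t r"
  by (simp add: pos_pow_def)

lemma ld_repr:
  assumes "s > 0" "x > 0"
  shows "ld mu s x = exp (s/2 - mu) / sqrt (2 * pi * s) * exp (- ((ln x - (mu - s))\<^sup>2) / (2 * s))"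
proof -
  define A where "A = - ((ln x - mu)\<^sup>2) / (2 * s)"
  define C where "C = - ((ln x - (mu - s))\<^sup>2) / (2 * s)"
  have eq: "A - ln x = (s/2 - mu) + C"
    using assms unfolding A_def C_def by (simp add: field_simps power2_eq_square)
  have "ld mu s x = (exp A / x) / sqrt (2 * pi * s)"
    using assms unfolding lognormal_density_def A_def by simp
  also have "exp A / x = exp (A - ln x)" using assms by (simp add: exp_diff)
  also have "\<dots> = exp (s/2 - mu) * exp C" unfolding eq exp_add ..
  finally show ?thesis unfolding C_def by simp
qed

lemma ld_scale:
  assumes "s > 0"
  shows "ld mu' s x = exp (mu - mu') * ld mu s (exp (mu - mu') * x)"
proof (cases "x > 0")
  case True
  have "ln (exp (mu - mu') * x) - mu = ln x - mu'" using True by (simp add: ln_mult)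
  then show ?thesis using True assms unfolding lognormal_density_def by simp
next
  case False
  then show ?thesis by (simp add: lognormal_density_def zero_less_mult_iff)
qed

lemma ld_tilt:
  assumes "s > 0"
  shows "ld mu s x * pos_pow x q = exp (q*mu + q\<^sup>2 * s/2) * ld (mu + q * s) s x"
proof (cases "x > 0")
  case True
  define A where "A = - ((ln x - mu)\<^sup>2) / (2 * s)"
  define C where "C = - ((ln x - (mu + q * s))\<^sup>2) / (2 * s)"
  have e: "A + q * ln x = (q*mu + q\<^sup>2 * s/2) + C"
    using assms unfolding A_def C_def by (simp add: field_simps power2_eq_square)
  have "ld mu s x * pos_pow x q = (exp A * exp (q * ln x)) / (x * sqrt (2 * pi * s))"
    using True by (simp add: lognormal_density_def pos_pow_def powr_def A_def mult.commute)
  also have "exp A * exp (q * ln x) = exp (q*mu + q\<^sup>2 * s/2) * exp C"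
    by (simp only: exp_add[symmetric] e)
  also have "exp (q*mu + q\<^sup>2 * s/2) * exp C / (x * sqrt (2 * pi * s)) = exp (q*mu + q\<^sup>2 * s/2) * ld (mu + q * s) s x"
    using True by (simp add: lognormal_density_def C_def)
  finally show ?thesis .
qed (simp add: lognormal_density_def pos_pow_def)

lemma ld_integrable_shift:
  assumes "s > 0" "integrable lborel (ld mu s)"
  shows "integrable lborel (ld mu' s)"
proof -
  have "integrable lborel (\<lambda>x. exp (mu - mu') * ld mu s (0 + exp (mu - mu') * x))"
    by (intro integrable_mult_right lborel_integrable_real_affine assms) simp
  then show ?thesis using ld_scale[OF assms(1), of mu'] by simp
qed

lemma ld_moment:
  assumes "s > 0" "integrable lborel (ld mu s)"
  shows "integrable lborel (\<lambda>x. ld mu s x * pos_pow x q)"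
  unfolding ld_tilt[OF assms(1)]
  by (intro integrable_mult_right ld_integrable_shift[OF assms])

lemma powr_sum_bound:
  fixes x B r :: real
  assumes "0 < x" "1 \<le> B" "0 \<le> r"
  shows "(x + B) powr r \<le> 2 powr r * (x powr r + B powr r)"
proof -
  have "(x + B) powr r \<le> (2 * max x B) powr r"
    using assms by (intro powr_mono2) auto
  also have "\<dots> = 2 powr r * max x B powr r"
    using assms by (simp add: powr_mult)
  also have "max x B powr r \<le> x powr r + B powr r"
    by (cases "x \<le> B") (auto simp: max_def)
  finally show ?thesis by (simp add: mult_left_mono)
qed

lemma pp_bound1:
  assumes "0 < x" "\<bar>\<nu>\<bar> \<le> B" "1 \<le> B" "0 \<le> r"
  shows "pos_pow (x - \<nu>) r \<le> 2 powr r * (pos_pow x r + B powr r)"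
proof (cases "x - \<nu> > 0")
  case True
  have "(x - \<nu>) powr r \<le> (x + B) powr r" using assms True by (intro powr_mono2) auto
  also have "\<dots> \<le> 2 powr r * (x powr r + B powr r)" by (rule powr_sum_bound) (use assms in auto)
  finally show ?thesis using True assms by (simp add: pos_pow_def)
next
  case False
  then show ?thesis using assms by (simp add: pos_pow_def)
qed

lemma pp_bound2:
  assumes "0 < x" "\<bar>\<nu>\<bar> \<le> B" "1 \<le> B" "0 \<le> r"
  shows "pos_pow (\<nu> - x) r \<le> 2 powr r * (pos_pow x r + B powr r)"
proof (cases "\<nu> - x > 0")
  case True
  have "(\<nu> - x) powr r \<le> (x + B) powr r" using assms True by (intro powr_mono2) auto
  also have "\<dots> \<le> 2 powr r * (x powr r + B powr r)" by (rule powr_sum_bound) (use assms in auto)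
  finally show ?thesis using True assms by (simp add: pos_pow_def)
next
  case False
  then show ?thesis using assms by (simp add: pos_pow_def)
qed

lemma integral_pos_interval:
  fixes g :: "real \<Rightarrow> real" and a b :: real
  assumes g: "integrable lborel g" and nn: "\<And>x. 0 \<le> g x" and ab: "a < b"
    and pos: "\<And>x. a < x \<Longrightarrow> x < b \<Longrightarrow> 0 < g x"
  shows "0 < integral\<^sup>L lborel g"
proof -
  have "0 \<le> integral\<^sup>L lborel g" using nn by (simp add: integral_nonneg)
  moreover have "integral\<^sup>L lborel g \<noteq> 0"
  proof
    assume "integral\<^sup>L lborel g = 0"
    then have "AE x in lborel. g x = 0" using integral_nonneg_eq_0_iff_AE[OF g] nn by simp
    then have "AE x in lborel. x \<notin> {a<..<b}"
      by eventually_elim (use pos in force)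
    then have "emeasure lborel {a<..<b} = 0"
      by (subst (asm) AE_iff_measurable[where N="{a<..<b}"]) auto
    then show False using ab by simp
  qed
  ultimately show ?thesis by simp
qed

locale LN =
  fixes mu s :: real
  assumes s_pos: "0 < s" and intf: "integrable lborel (ld mu s)"
begin

abbreviation f where "f \<equiv> ld mu s"

definition P :: "real \<Rightarrow> real \<Rightarrow> real" where
  "P r \<nu> = (\<integral>x. f x * pos_pow (x - \<nu>) r \<partial>lborel)"
definition Q :: "real \<Rightarrow> real \<Rightarrow> real" where
  "Q r \<nu> = (\<integral>x. f x * pos_pow (\<nu> - x) r \<partial>lborel)"
definition H :: "real \<Rightarrow> real \<Rightarrow> real" where
  "H r \<nu> = P r \<nu> - Q r \<nu>"

lemma f_nonneg: "0 \<le> f x" using ld_nonneg[OF s_pos] .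
lemma f_pos: "0 < x \<Longrightarrow> 0 < f x" using ld_pos[OF s_pos] .

definition w :: "real \<Rightarrow> real \<Rightarrow> real \<Rightarrow> real" where
  "w B r x = 2 powr r * (f x * pos_pow x r + B powr r * f x)"

lemma w_int: "integrable lborel (w B r)"
proof -
  have "integrable lborel (\<lambda>x. f x * pos_pow x r + B powr r * f x)"
    by (intro Bochner_Integration.integrable_add integrable_mult_right ld_moment[OF s_pos intf] intf)
  then show ?thesis unfolding w_def by (intro integrable_mult_right)
qed

lemma w_nonneg: "0 \<le> w B r x"
  unfolding w_def using f_nonneg pos_pow_nonneg by (intro mult_nonneg_nonneg add_nonneg_nonneg) auto

lemma dom1:
  assumes "\<bar>\<nu>\<bar> \<le> B" "1 \<le> B" "0 \<le> r"
  shows "\<bar>f x * pos_pow (x - \<nu>) r\<bar> \<le> w B r x"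
proof (cases "x > 0")
  case True
  have "\<bar>f x * pos_pow (x - \<nu>) r\<bar> = f x * pos_pow (x - \<nu>) r"
    using f_nonneg pos_pow_nonneg by simp
  also have "\<dots> \<le> f x * (2 powr r * (pos_pow x r + B powr r))"
    by (intro mult_left_mono pp_bound1 f_nonneg) (use assms True in auto)
  finally show ?thesis by (simp add: w_def algebra_simps)
qed (simp add: ld_zero w_def)

lemma dom2:
  assumes "\<bar>\<nu>\<bar> \<le> B" "1 \<le> B" "0 \<le> r"
  shows "\<bar>f x * pos_pow (\<nu> - x) r\<bar> \<le> w B r x"
proof (cases "x > 0")
  case True
  have "\<bar>f x * pos_pow (\<nu> - x) r\<bar> = f x * pos_pow (\<nu> - x) r"
    using f_nonneg pos_pow_nonneg by simp
  also have "\<dots> \<le> f x * (2 powr r * (pos_pow x r + B powr r))"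
    by (intro mult_left_mono pp_bound2 f_nonneg) (use assms True in auto)
  finally show ?thesis by (simp add: w_def algebra_simps)
qed (simp add: ld_zero w_def)

lemma intP: "0 \<le> r \<Longrightarrow> integrable lborel (\<lambda>x. f x * pos_pow (x - \<nu>) r)"
  by (rule Bochner_Integration.integrable_bound[OF w_int[of "1 + \<bar>\<nu>\<bar>" r]])
     (auto intro!: AE_I2 order.trans[OF _ abs_ge_self] dom1 simp: w_nonneg)

lemma intQ: "0 \<le> r \<Longrightarrow> integrable lborel (\<lambda>x. f x * pos_pow (\<nu> - x) r)"
  by (rule Bochner_Integration.integrable_bound[OF w_int[of "1 + \<bar>\<nu>\<bar>" r]])
     (auto intro!: AE_I2 order.trans[OF _ abs_ge_self] dom2 simp: w_nonneg)

end
lemma pp_mono: "a \<le> b \<Longrightarrow> 0 \<le> r \<Longrightarrow> pos_pow a r \<le> pos_pow b r"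
  unfolding pos_pow_def by (auto intro!: powr_mono2)

lemma pp_pos: "0 < t \<Longrightarrow> 0 < pos_pow t r"
  unfolding pos_pow_def by simp

lemma pp_zero: "t \<le> 0 \<Longrightarrow> pos_pow t r = 0"
  unfolding pos_pow_def by simp

lemma isCont_pp:
  assumes "t \<noteq> (0::real)"
  shows "isCont (\<lambda>t. pos_pow t r) t"
proof (cases "t > 0")
  case True
  have "continuous_on {0<..} (\<lambda>t. pos_pow t r)"
  proof (rule continuous_on_cong[THEN iffD1])
    show "continuous_on {0<..} (\<lambda>t::real. t powr r)"
      by (intro continuous_intros) auto
  qed (auto simp: pos_pow_def)
  moreover have "t \<in> interior {0<..}" using True by (simp add: interior_open)
  ultimately show ?thesis by (intro continuous_on_interior[of "{0<..}"]) auto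
next
  case False
  then have t: "t < 0" using assms by simp
  have "continuous_on {..<0} (\<lambda>t. pos_pow t r)"
  proof (rule continuous_on_cong[THEN iffD1])
    show "continuous_on {..<0} (\<lambda>t::real. 0::real)"
      by (intro continuous_intros)
  qed (auto simp: pos_pow_def)
  moreover have "t \<in> interior {..<0}" using t by (simp add: interior_open)
  ultimately show ?thesis by (intro continuous_on_interior[of "{..<0}"]) auto
qed

context LN
begin

lemma Q_nonpos: "\<nu> \<le> 0 \<Longrightarrow> Q r \<nu> = 0"
proof -
  assume "\<nu> \<le> 0"
  then have "\<And>x. f x * pos_pow (\<nu> - x) r = 0"
    by (case_tac "x > 0") (auto simp: ld_zero pp_zero)
  then have "(\<lambda>x. f x * pos_pow (\<nu> - x) r) = (\<lambda>x. 0)" by (intro ext) 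
  then show ?thesis unfolding Q_def by simp
qed

lemma P_pos: "\<nu> \<le> 0 \<Longrightarrow> 0 \<le> r \<Longrightarrow> 0 < P r \<nu>"
  unfolding P_def
  by (rule integral_pos_interval[where a=0 and b=1])
     (auto intro!: intP mult_nonneg_nonneg f_nonneg pos_pow_nonneg mult_pos_pos f_pos pp_pos)

lemma H_pos: "\<nu> \<le> 0 \<Longrightarrow> 0 \<le> r \<Longrightarrow> 0 < H r \<nu>"
  using P_pos Q_nonpos by (simp add: H_def)

lemma H_anti:
  assumes "\<nu> \<le> \<nu>'" "0 \<le> r"
  shows "H r \<nu>' \<le> H r \<nu>"
proof -
  have "P r \<nu>' \<le> P r \<nu>" unfolding P_def
    by (intro integral_mono intP assms mult_left_mono f_nonneg pp_mono) (use assms in auto)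
  moreover have "Q r \<nu> \<le> Q r \<nu>'" unfolding Q_def
    by (intro integral_mono intQ assms mult_left_mono f_nonneg pp_mono) (use assms in auto)
  ultimately show ?thesis by (simp add: H_def)
qed

lemma H_strict:
  assumes "0 < a" "a < b" "0 \<le> r"
  shows "H r b < H r a"
proof -
  have "P r b \<le> P r a" unfolding P_def
    by (intro integral_mono intP assms mult_left_mono f_nonneg pp_mono) (use assms in auto)
  moreover have "0 < Q r b - Q r a"
  proof -
    have "Q r b - Q r a = (\<integral>x. f x * pos_pow (b - x) r - f x * pos_pow (a - x) r \<partial>lborel)"
      unfolding Q_def by (rule Bochner_Integration.integral_diff[symmetric]) (use intQ assms in auto)
    also have "0 < \<dots>"
    proof (rule integral_pos_interval[where a=a and b=b])
      show "integrable lborel (\<lambda>x. f x * pos_pow (b - x) r - f x * pos_pow (a - x) r)"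
        using intQ assms by auto
      show "0 \<le> f x * pos_pow (b - x) r - f x * pos_pow (a - x) r" for x
        using mult_left_mono[OF pp_mono[of "a - x" "b - x" r] f_nonneg[of x]] assms by auto
      show "0 < f x * pos_pow (b - x) r - f x * pos_pow (a - x) r" if "a < x" "x < b" for x
        using that assms by (auto simp: pp_zero intro!: mult_pos_pos f_pos pp_pos)
    qed (use assms in auto)
    finally show ?thesis .
  qed
  ultimately show ?thesis by (simp add: H_def)
qed

lemma H_unique:
  assumes "H r a = 0" "H r b = 0" "0 \<le> r"
  shows "a = b"
proof -
  have a: "0 < a" using H_pos[of a r] assms by force
  have b: "0 < b" using H_pos[of b r] assms by force
  show ?thesis
  proof (rule ccontr)
    assume "a \<noteq> b"
    then consider "a < b" | "b < a" by linarith
    then show False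
      using H_strict[OF a _ assms(3), of b] H_strict[OF b _ assms(3), of a] assms by auto
  qed
qed

lemma H_cont:
  assumes r: "0 \<le> r"
  shows "continuous_on {a..b} (H r)"
proof (rule continuous_on_sequentiallyI)
  fix u c assume u: "\<forall>n. u n \<in> {a..b}" and c: "c \<in> {a..b}" and lim: "u \<longlonglongrightarrow> c"
  define B where "B = 1 + \<bar>a\<bar> + \<bar>b\<bar>"
  have ub: "\<bar>u n\<bar> \<le> B" for n using u[rule_format, of n] unfolding B_def by auto
  have cB: "\<bar>c\<bar> \<le> B" using c unfolding B_def by auto
  have B1: "1 \<le> B" unfolding B_def by simp
  have "(\<lambda>n. P r (u n)) \<longlonglongrightarrow> P r c"
    unfolding P_def
  proof (rule integral_dominated_convergence[where w="w B r"])
    show "AE x in lborel. (\<lambda>n. f x * pos_pow (x - u n) r) \<longlonglongrightarrow> f x * pos_pow (x - c) r"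
      using AE_lborel_singleton[of c]
    proof eventually_elim
      case (elim x)
      have "(\<lambda>n. pos_pow (x - u n) r) \<longlonglongrightarrow> pos_pow (x - c) r"
        by (rule isCont_tendsto_compose[OF isCont_pp]) (use elim lim in \<open>auto intro!: tendsto_intros\<close>)
      then show ?case by (intro tendsto_mult_left)
    qed
    show "AE x in lborel. norm (f x * pos_pow (x - u n) r) \<le> w B r x" for n
      using dom1[OF ub B1 r] by auto
  qed (auto simp: w_int)
  moreover have "(\<lambda>n. Q r (u n)) \<longlonglongrightarrow> Q r c"
    unfolding Q_def
  proof (rule integral_dominated_convergence[where w="w B r"])
    show "AE x in lborel. (\<lambda>n. f x * pos_pow (u n - x) r) \<longlonglongrightarrow> f x * pos_pow (c - x) r"
      using AE_lborel_singleton[of c]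
    proof eventually_elim
      case (elim x)
      have "(\<lambda>n. pos_pow (u n - x) r) \<longlonglongrightarrow> pos_pow (c - x) r"
        by (rule isCont_tendsto_compose[OF isCont_pp]) (use elim lim in \<open>auto intro!: tendsto_intros\<close>)
      then show ?case by (intro tendsto_mult_left)
    qed
    show "AE x in lborel. norm (f x * pos_pow (u n - x) r) \<le> w B r x" for n
      using dom2[OF ub B1 r] by auto
  qed (auto simp: w_int)
  ultimately show "(\<lambda>n. H r (u n)) \<longlonglongrightarrow> H r c"
    unfolding H_def by (intro tendsto_diff)
qed

lemma Q01_pos: "0 < Q 0 1"
  unfolding Q_def
  by (rule integral_pos_interval[where a=0 and b=1])
     (auto intro!: intQ mult_nonneg_nonneg f_nonneg pos_pow_nonneg mult_pos_pos f_pos pp_pos)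

lemma H_neg:
  assumes r: "0 \<le> r"
  shows "\<exists>\<nu>. H r \<nu> < 0"
proof -
  define M1 where "M1 = (\<integral>x. f x * pos_pow x (r + 1) \<partial>lborel)"
  define c1 where "c1 = Q 0 1"
  have c1: "0 < c1" using Q01_pos by (simp add: c1_def)
  have M1: "0 \<le> M1" unfolding M1_def using f_nonneg pos_pow_nonneg by (intro integral_nonneg_AE AE_I2 mult_nonneg_nonneg) auto
  define \<nu> where "\<nu> = max 2 (M1 / c1 + 1)"
  have \<nu>2: "2 \<le> \<nu>" unfolding \<nu>_def by simp
  have "M1 / c1 < \<nu>" unfolding \<nu>_def by simp
  then have "M1 < c1 * \<nu>" using c1 by (simp add: field_simps)
  then have lt: "M1 / \<nu> < c1" using \<nu>2 by (simp add: field_simps)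
  have "P r \<nu> \<le> (\<integral>x. f x * pos_pow x (r + 1) / \<nu> \<partial>lborel)"
    unfolding P_def
  proof (intro integral_mono intP r integrable_divide ld_moment[OF s_pos intf])
    fix x
    show "f x * pos_pow (x - \<nu>) r \<le> f x * pos_pow x (r + 1) / \<nu>"
    proof (cases "x > \<nu>")
      case True
      then have x0: "0 < x" using \<nu>2 by simp
      have "(x - \<nu>) powr r \<le> x powr r" using True \<nu>2 r by (intro powr_mono2) auto
      also have "x powr r \<le> x powr (r + 1) / \<nu>"
        using True \<nu>2 x0 by (simp add: powr_add field_simps mult_right_mono)
      finally have "pos_pow (x - \<nu>) r \<le> pos_pow x (r + 1) / \<nu>"
        using True x0 by (simp add: pos_pow_def)
      then have "f x * pos_pow (x - \<nu>) r \<le> f x * (pos_pow x (r + 1) / \<nu>)"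
        using f_nonneg[of x] by (rule mult_left_mono)
      then show ?thesis by simp
    next
      case False
      then show ?thesis using f_nonneg[of x] \<nu>2 pos_pow_nonneg[of x "r+1"]
        by (simp add: pp_zero)
    qed
  qed
  also have "\<dots> = M1 / \<nu>" unfolding M1_def by simp
  finally have Pb: "P r \<nu> \<le> M1 / \<nu>" .
  have "c1 \<le> Q r \<nu>"
    unfolding Q_def c1_def
  proof (intro integral_mono intQ r)
    fix x
    show "f x * pos_pow (1 - x) 0 \<le> f x * pos_pow (\<nu> - x) r"
    proof (cases "x < 1")
      case True
      have "1 \<le> (\<nu> - x) powr r" using True \<nu>2 r by (intro ge_one_powr_ge_zero) auto
      then have "f x * 1 \<le> f x * (\<nu> - x) powr r" using f_nonneg[of x] by (rule mult_left_mono)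
      then show ?thesis using True \<nu>2 by (simp add: pos_pow_def)
    next
      case False
      then show ?thesis using f_nonneg[of x] pos_pow_nonneg[of "\<nu> - x" r] by (simp add: pp_zero)
    qed
  qed simp
  then have "H r \<nu> < 0" using Pb lt by (simp add: H_def)
  then show ?thesis ..
qed

lemma H_exists:
  assumes r: "0 \<le> r"
  shows "\<exists>\<nu>. H r \<nu> = 0"
proof -
  obtain b where b: "H r b < 0" using H_neg[OF r] by blast
  have b0: "0 \<le> b" using H_pos[of b r] r b by force
  have "\<exists>x. 0 \<le> x \<and> x \<le> b \<and> H r x = 0"
    by (rule IVT2') (use b b0 H_pos[of 0 r] r H_cont[OF r] in auto)
  then show ?thesis by blast
qed

lemma H_ex1: "0 \<le> r \<Longrightarrow> \<exists>!\<nu>. H r \<nu> = 0"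
  using H_exists H_unique by blast

definition lm where "lm = mu - s"
definition md where "md = exp lm"
definition Dd where "Dd \<nu> t = f (\<nu> + t) - f (\<nu> - t)"

lemma md_pos: "0 < md" by (simp add: md_def)

lemma f_cmp_le:
  assumes "0 < x" "0 < y" "(ln x - lm)\<^sup>2 \<le> (ln y - lm)\<^sup>2"
  shows "f y \<le> f x"
proof -
  have "exp (- ((ln y - lm)\<^sup>2) / (2 * s)) \<le> exp (- ((ln x - lm)\<^sup>2) / (2 * s))"
    using assms s_pos by (simp add: divide_right_mono)
  then have "exp (s/2 - mu) / sqrt (2 * pi * s) * exp (- ((ln y - lm)\<^sup>2) / (2 * s))
      \<le> exp (s/2 - mu) / sqrt (2 * pi * s) * exp (- ((ln x - lm)\<^sup>2) / (2 * s))"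
    by (rule mult_left_mono) (use s_pos in auto)
  then show ?thesis using ld_repr[OF s_pos assms(1), of mu] ld_repr[OF s_pos assms(2), of mu]
    by (simp add: lm_def)
qed

lemma f_cmp_lt:
  assumes "0 < x" "0 < y" "(ln x - lm)\<^sup>2 < (ln y - lm)\<^sup>2"
  shows "f y < f x"
proof -
  have "exp (- ((ln y - lm)\<^sup>2) / (2 * s)) < exp (- ((ln x - lm)\<^sup>2) / (2 * s))"
    using assms s_pos by (simp add: divide_strict_right_mono)
  then have "exp (s/2 - mu) / sqrt (2 * pi * s) * exp (- ((ln y - lm)\<^sup>2) / (2 * s))
      < exp (s/2 - mu) / sqrt (2 * pi * s) * exp (- ((ln x - lm)\<^sup>2) / (2 * s))"
    by (rule mult_strict_left_mono) (use s_pos in auto)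
  then show ?thesis using ld_repr[OF s_pos assms(1), of mu] ld_repr[OF s_pos assms(2), of mu]
    by (simp add: lm_def)
qed

lemma sq_diff: "(a::real)\<^sup>2 - b\<^sup>2 = (a - b) * (a + b)"
  by (simp add: algebra_simps power2_eq_square)

lemma prod_ln:
  assumes "0 < x" "0 < y"
  shows "(ln x - lm) + (ln y - lm) = ln (x * y) - ln (md\<^sup>2)"
  using assms by (simp add: ln_mult md_def ln_realpow)

lemma cross_ge:
  assumes t: "0 < t" and le: "\<nu>\<^sup>2 - md\<^sup>2 \<le> t\<^sup>2"
  shows "0 \<le> Dd \<nu> t"
proof (cases "\<nu> - t > 0")
  case True
  define x where "x = \<nu> + t"
  define y where "y = \<nu> - t"
  have y0: "0 < y" and xy: "y < x" using True t by (auto simp: x_def y_def)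
  have x0: "0 < x" using y0 xy by simp
  have "x * y \<le> md\<^sup>2" using le by (simp add: x_def y_def algebra_simps power2_eq_square)
  then have "ln (x * y) \<le> ln (md\<^sup>2)" using x0 y0 md_pos by (subst ln_le_cancel_iff) auto
  then have sum: "(ln x - lm) + (ln y - lm) \<le> 0" using prod_ln[OF x0 y0] by simp
  have dif: "0 \<le> (ln x - lm) - (ln y - lm)" using xy y0 by simp
  have "(ln x - lm)\<^sup>2 - (ln y - lm)\<^sup>2 \<le> 0"
    unfolding sq_diff using dif sum by (simp add: mult_nonneg_nonpos)
  then have "f y \<le> f x" using f_cmp_le[OF x0 y0] by simp
  then show ?thesis by (simp add: Dd_def x_def y_def)
next
  case False
  then show ?thesis by (simp add: Dd_def ld_zero f_nonneg)
qed

lemma cross_gt: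
  assumes t: "0 < t" and p: "0 < \<nu> + t" and lt: "\<nu>\<^sup>2 - md\<^sup>2 < t\<^sup>2"
  shows "0 < Dd \<nu> t"
proof (cases "\<nu> - t > 0")
  case True
  define x where "x = \<nu> + t"
  define y where "y = \<nu> - t"
  have y0: "0 < y" and xy: "y < x" using True t by (auto simp: x_def y_def)
  have x0: "0 < x" using y0 xy by simp
  have "x * y < md\<^sup>2" using lt by (simp add: x_def y_def algebra_simps power2_eq_square)
  then have "ln (x * y) < ln (md\<^sup>2)" using x0 y0 md_pos by (subst ln_less_cancel_iff) auto
  then have sum: "(ln x - lm) + (ln y - lm) < 0" using prod_ln[OF x0 y0] by simp
  have dif: "0 < (ln x - lm) - (ln y - lm)" using xy y0 by simp
  have "(ln x - lm)\<^sup>2 - (ln y - lm)\<^sup>2 < 0"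
    unfolding sq_diff using dif sum by (simp add: mult_pos_neg)
  then have "f y < f x" using f_cmp_lt[OF x0 y0] by simp
  then show ?thesis by (simp add: Dd_def x_def y_def)
next
  case False
  then show ?thesis using p by (simp add: Dd_def ld_zero f_pos)
qed

lemma cross_le:
  assumes t: "0 < t" and le: "t\<^sup>2 \<le> \<nu>\<^sup>2 - md\<^sup>2"
  shows "Dd \<nu> t \<le> 0"
proof (cases "\<nu> - t > 0")
  case True
  define x where "x = \<nu> + t"
  define y where "y = \<nu> - t"
  have y0: "0 < y" and xy: "y < x" using True t by (auto simp: x_def y_def)
  have x0: "0 < x" using y0 xy by simp
  have "md\<^sup>2 \<le> x * y" using le by (simp add: x_def y_def algebra_simps power2_eq_square)
  then have "ln (md\<^sup>2) \<le> ln (x * y)" using x0 y0 md_pos by (subst ln_le_cancel_iff) auto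
  then have sum: "0 \<le> (ln x - lm) + (ln y - lm)" using prod_ln[OF x0 y0] by simp
  have dif: "0 \<le> (ln x - lm) - (ln y - lm)" using xy y0 by simp
  have "0 \<le> (ln x - lm)\<^sup>2 - (ln y - lm)\<^sup>2"
    unfolding sq_diff using dif sum by simp
  then have "f x \<le> f y" using f_cmp_le[OF y0 x0] by simp
  then show ?thesis by (simp add: Dd_def x_def y_def)
next
  case False
  have "t\<^sup>2 < \<nu>\<^sup>2" using le md_pos by (smt (verit) zero_less_power)
  then have "t\<^sup>2 < \<bar>\<nu>\<bar>\<^sup>2" by simp
  then have "t < \<bar>\<nu>\<bar>" by (rule power_less_imp_less_base) simp
  then have "\<nu> + t \<le> 0" using False t by (auto simp: abs_if split: if_splits)
  then show ?thesis using False by (simp add: Dd_def ld_zero)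
qed

lemma repr_int:
  assumes r: "0 \<le> r"
  shows "integrable lborel (\<lambda>t. pos_pow t r * Dd \<nu> t)"
    and "H r \<nu> = (\<integral>t. pos_pow t r * Dd \<nu> t \<partial>lborel)"
proof -
  have i1: "integrable lborel (\<lambda>t. f (\<nu> + 1 * t) * pos_pow (\<nu> + 1 * t - \<nu>) r)"
    by (rule lborel_integrable_real_affine[OF intP[OF r]]) simp
  have i2: "integrable lborel (\<lambda>t. f (\<nu> + (-1) * t) * pos_pow (\<nu> - (\<nu> + (-1) * t)) r)"
    by (rule lborel_integrable_real_affine[OF intQ[OF r]]) simp
  have i1': "integrable lborel (\<lambda>t. f (\<nu> + t) * pos_pow t r)" using i1 by simp
  have i2': "integrable lborel (\<lambda>t. f (\<nu> - t) * pos_pow t r)" using i2 by simp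
  have P: "P r \<nu> = (\<integral>t. f (\<nu> + t) * pos_pow t r \<partial>lborel)"
    unfolding P_def using lborel_integral_real_affine[where c=1 and t=\<nu>, of "\<lambda>x. f x * pos_pow (x - \<nu>) r"]
    by simp
  have Q: "Q r \<nu> = (\<integral>t. f (\<nu> - t) * pos_pow t r \<partial>lborel)"
    unfolding Q_def using lborel_integral_real_affine[where c="-1" and t=\<nu>, of "\<lambda>x. f x * pos_pow (\<nu> - x) r"]
    by simp
  have eq: "(\<lambda>t. pos_pow t r * Dd \<nu> t) = (\<lambda>t. f (\<nu> + t) * pos_pow t r - f (\<nu> - t) * pos_pow t r)"
    by (auto simp: Dd_def algebra_simps)
  show "integrable lborel (\<lambda>t. pos_pow t r * Dd \<nu> t)"
    unfolding eq using i1' i2' by auto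
  show "H r \<nu> = (\<integral>t. pos_pow t r * Dd \<nu> t \<partial>lborel)"
    unfolding eq H_def P Q using i1' i2' by simp
qed

lemma H_md_pos:
  assumes r: "0 \<le> r"
  shows "0 < H r md"
  unfolding repr_int(2)[OF r]
proof (rule integral_pos_interval[where a=0 and b=1])
  show "integrable lborel (\<lambda>t. pos_pow t r * Dd md t)" by (rule repr_int(1)[OF r])
  show "0 \<le> pos_pow t r * Dd md t" for t
    by (cases "t > 0") (auto simp: pp_zero intro!: mult_nonneg_nonneg pos_pow_nonneg cross_ge)
  show "0 < pos_pow t r * Dd md t" if "0 < t" "t < 1" for t
    using that md_pos by (auto intro!: mult_pos_pos pp_pos cross_gt)
qed simp

lemma H_cross:
  assumes r1: "0 \<le> r1" and r12: "r1 < r2" and z: "H r1 \<nu> = 0"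
  shows "0 < H r2 \<nu>"
proof -
  have r2: "0 \<le> r2" using r1 r12 by simp
  define k where "k = r2 - r1"
  have k: "0 < k" using r12 by (simp add: k_def)
  define t0 where "t0 = sqrt (max 0 (\<nu>\<^sup>2 - md\<^sup>2))"
  have t00: "0 \<le> t0" by (simp add: t0_def)
  have t0sq: "t0\<^sup>2 = max 0 (\<nu>\<^sup>2 - md\<^sup>2)" by (simp add: t0_def)
  define c0 where "c0 = t0 powr k"
  define G where "G t = pos_pow t r1 * Dd \<nu> t * (pos_pow t k - c0)" for t
  have Geq: "G = (\<lambda>t. pos_pow t r2 * Dd \<nu> t - c0 * (pos_pow t r1 * Dd \<nu> t))"
  proof
    fix t show "G t = pos_pow t r2 * Dd \<nu> t - c0 * (pos_pow t r1 * Dd \<nu> t)"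
    proof (cases "t > 0")
      case True
      have "pos_pow t r1 * pos_pow t k = pos_pow t r2"
        using True by (simp add: pos_pow_def k_def powr_add[symmetric])
      then show ?thesis unfolding G_def by (simp add: algebra_simps)
    qed (simp add: G_def pp_zero)
  qed
  have Gint: "integrable lborel G"
    unfolding Geq using repr_int(1)[OF r1] repr_int(1)[OF r2] by auto
  have "(\<integral>t. G t \<partial>lborel) = H r2 \<nu> - c0 * H r1 \<nu>"
    unfolding Geq repr_int(2)[OF r1] repr_int(2)[OF r2]
    using repr_int(1)[OF r1] repr_int(1)[OF r2] by simp
  then have HG: "H r2 \<nu> = (\<integral>t. G t \<partial>lborel)" using z by simp
  define T where "T = t0 + \<bar>\<nu>\<bar> + 1"
  have "0 < (\<integral>t. G t \<partial>lborel)"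
  proof (rule integral_pos_interval[OF Gint, where a=T and b="T+1"])
    show "0 \<le> G t" for t
    proof (cases "t > 0")
      case t: True
      show ?thesis
      proof (cases "t \<le> t0")
        case True
        then have "t\<^sup>2 \<le> t0\<^sup>2" using t by (intro power_mono) auto
        then have "t\<^sup>2 \<le> \<nu>\<^sup>2 - md\<^sup>2" using t t0sq by (simp add: max_def split: if_splits)
        then have D: "Dd \<nu> t \<le> 0" using cross_le t by blast
        have "t powr k \<le> t0 powr k" using True t k by (intro powr_mono2) auto
        then have "pos_pow t k - c0 \<le> 0" using t by (simp add: pos_pow_def c0_def)
        then have "0 \<le> Dd \<nu> t * (pos_pow t k - c0)" using D by (simp add: mult_nonpos_nonpos)
        then show ?thesis unfolding G_def using pos_pow_nonneg[of t r1]
          by (metis mult.assoc mult_nonneg_nonneg)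
      next
        case False
        then have "t0\<^sup>2 \<le> t\<^sup>2" using t00 by (intro power_mono) auto
        then have "\<nu>\<^sup>2 - md\<^sup>2 \<le> t\<^sup>2" using t0sq by simp
        then have D: "0 \<le> Dd \<nu> t" using cross_ge t by blast
        have "t0 powr k \<le> t powr k" using False t00 k by (intro powr_mono2) auto
        then have "0 \<le> pos_pow t k - c0" using t by (simp add: pos_pow_def c0_def)
        then have "0 \<le> Dd \<nu> t * (pos_pow t k - c0)" using D by simp
        then show ?thesis unfolding G_def using pos_pow_nonneg[of t r1]
          by (metis mult.assoc mult_nonneg_nonneg)
      qed
    qed (simp add: G_def pp_zero)
    show "0 < G t" if "T < t" "t < T + 1" for t
    proof -
      have t: "0 < t" "t0 < t" "\<bar>\<nu>\<bar> + 1 < t" using that t00 by (auto simp: T_def)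
      have D: "0 < Dd \<nu> t" using t by (simp add: Dd_def ld_zero f_pos)
      have "t0 powr k < t powr k" using t t00 k by (intro powr_less_mono2) auto
      then have "0 < pos_pow t k - c0" using t by (simp add: pos_pow_def c0_def)
      then show ?thesis unfolding G_def using D pp_pos[OF t(1), of r1] by simp
    qed
  qed simp
  then show ?thesis using HG by simp
qed

lemma ln_md: "ln md = lm" by (simp add: md_def)

lemma f_unimodal: "unimodal_density f"
  unfolding unimodal_density_def
proof (intro exI[of _ md] conjI)
  show "mono_on {..md} f"
  proof (rule mono_onI)
    fix x y assume xy: "x \<in> {..md}" "y \<in> {..md}" "x \<le> y"
    show "f x \<le> f y"
    proof (cases "x > 0")
      case True
      then have y0: "0 < y" using xy by simp
      have "ln x \<le> ln y" "ln y \<le> lm" using True y0 xy md_pos by (auto simp flip: ln_md)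
      then have "(lm - ln y)\<^sup>2 \<le> (lm - ln x)\<^sup>2" by (intro power_mono) auto
      then have "(ln y - lm)\<^sup>2 \<le> (ln x - lm)\<^sup>2" by (simp add: power2_commute)
      then show ?thesis using f_cmp_le[OF y0 True] by simp
    qed (simp add: ld_zero f_nonneg)
  qed
  show "antimono_on {md..} f"
  proof (rule monotone_onI)
    fix x y assume xy: "x \<in> {md..}" "y \<in> {md..}" "x \<le> y"
    have x0: "0 < x" and y0: "0 < y" using xy md_pos by auto
    have "lm \<le> ln x" "ln x \<le> ln y" using x0 y0 xy md_pos by (auto simp flip: ln_md)
    then have "(ln x - lm)\<^sup>2 \<le> (ln y - lm)\<^sup>2" by (intro power_mono) auto
    then show "f y \<le> f x" using f_cmp_le[OF x0 y0] by simp
  qed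
qed

lemma f_mode: "density_mode f = md"
  unfolding density_mode_def
proof (rule the_equality)
  show mx: "\<forall>x. x \<noteq> md \<longrightarrow> f x < f md"
  proof (intro allI impI)
    fix x assume x: "x \<noteq> md"
    show "f x < f md"
    proof (cases "x > 0")
      case True
      have "ln x \<noteq> lm" using x True unfolding md_def by (metis exp_ln)
      then have "(ln md - lm)\<^sup>2 < (ln x - lm)\<^sup>2" by (simp add: ln_md)
      then show ?thesis using f_cmp_lt[OF md_pos True] by simp
    qed (simp add: ld_zero f_pos md_pos)
  qed
  fix m assume m: "\<forall>x. x \<noteq> m \<longrightarrow> f x < f m"
  show "m = md"
  proof (rule ccontr)
    assume "m \<noteq> md"
    then show False using m mx by (metis less_asym)
  qed
qed

end

lemma ld_integrable:
  assumes M: "prob_space M" and s: "0 < sigma2"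
    and D: "distributed M lborel X (\<lambda>x. ennreal (lognormal_density mu sigma2 x))"
  shows "integrable lborel (lognormal_density mu sigma2)"
proof -
  have "integrable lborel (\<lambda>x. lognormal_density mu sigma2 x * 1) \<longleftrightarrow> integrable M (\<lambda>x. (1::real))"
    by (rule distributed_integrable[OF D]) (auto simp: ld_nonneg[OF s])
  moreover have "integrable M (\<lambda>x. (1::real))"
    using M by (simp add: finite_measure.integrable_const prob_space.finite_measure)
  ultimately show ?thesis by simp
qed

theorem corollary1:
  fixes M :: "'a measure" and X :: "'a \<Rightarrow> real" and mu sigma2 :: real
  assumes "prob_space M"
    and "sigma2 > 0"
    and "distributed M lborel X (\<lambda>x. ennreal (lognormal_density mu sigma2 x))"
  shows "truly_mode_pos_skewed (distr M lborel X) (lognormal_density mu sigma2)"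
proof -
  interpret LN mu sigma2
    using assms ld_integrable by unfold_locales auto
  have N: "distr M lborel X = density lborel (\<lambda>x. ennreal (f x))"
    using assms(3) by (simp add: distributed_def)
  have int_N: "(\<integral>x. g x \<partial>distr M lborel X) = (\<integral>x. f x * g x \<partial>lborel)"
    if [measurable]: "g \<in> borel_measurable borel" for g
    unfolding N by (rule integral_real_density) (auto simp: f_nonneg)
  have pm: "pmean (distr M lborel X) p = (THE \<nu>. H (p - 1) \<nu> = 0)" for p
    unfolding pmean_def int_N[OF pos_pow_meas] H_def P_def Q_def
    by (simp add: int_N)
  have root: "H (p - 1) (pmean (distr M lborel X) p) = 0" if "1 \<le> p" for p
    unfolding pm by (rule theI') (rule H_ex1, use that in simp)
  have dom: "1 \<le> p" if "p \<in> pmean_domain (distr M lborel X)" for p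
    using that by (simp add: pmean_domain_def)
  show ?thesis
    unfolding truly_mode_pos_skewed_def f_mode
  proof (intro conjI f_unimodal strict_mono_onI)
    fix p q assume p: "p \<in> pmean_domain (distr M lborel X) \<union> {0}"
      and q: "q \<in> pmean_domain (distr M lborel X) \<union> {0}" and pq: "p < q"
    have q1: "1 \<le> q" using q pq dom by (cases "q = 0") (auto, use p dom in force)
    let ?nq = "pmean (distr M lborel X) q"
    have Hq: "H (q - 1) ?nq = 0" using root[OF q1] .
    show "(if p = 0 then md else pmean (distr M lborel X) p) < (if q = 0 then md else ?nq)"
    proof (cases "p = 0")
      case True
      have "md < ?nq"
      proof (rule ccontr)
        assume "\<not> md < ?nq"
        then have "H (q - 1) md \<le> H (q - 1) ?nq" using q1 by (intro H_anti) auto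
        then show False using H_md_pos[of "q - 1"] q1 Hq by simp
      qed
      then show ?thesis using True q1 by simp
    next
      case False
      then have p1: "1 \<le> p" using p dom by auto
      let ?np = "pmean (distr M lborel X) p"
      have "0 < H (q - 1) ?np"
        by (rule H_cross[OF _ _ root[OF p1]]) (use p1 pq in auto)
      have "?np < ?nq"
      proof (rule ccontr)
        assume "\<not> ?np < ?nq"
        then have "H (q - 1) ?np \<le> H (q - 1) ?nq" using q1 by (intro H_anti) auto
        then show False using \<open>0 < H (q - 1) ?np\<close> Hq by simp
      qed
      then show ?thesis using False q1 by simp
    qed
  qed
qed

end
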